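(* Let $n$ be an odd perfect number such that $15 \mid n$, $5^{\alpha} \,\|\, n$ and $3^{2b} \,\|\, n$ for some positive integers $\alpha, b$. If $3 \mid (\alpha+1)(2b+1)$, then $n$ has a good prime divisor.
   Context: A positive integer $n$ is perfect if $\sigma(n)=2n$, where $\sigma$ is the sum-of-divisors function. The notation $a \,\|\, b$ means $a \mid b$ and $\gcd(a, b/a) = 1$. Let $\Phi_3(x) = x^2+x+1$. Let $\Sigma$ be the set of primes $p$ with $p \equiv 2$ or $p \equiv 4 \pmod 7$. For a prime $x > 7$, let $T(x)$ be the set of primes $q \neq 3$ with $q \mid \Phi_3(x)$. For a prime $p > 7$, define sets $S_n(p)$ recursively by $S_0(p) = \{p\}$ and $S_{n+1}(p) = S_n(p) \cup \bigcup_{x \in S_n(p)} T(x)$. A prime $p > 7$ is called good if $S_n(p) \cap \Sigma \neq \emptyset$ for some integer $n \ge 0$. *)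

theory Defs
  imports "HOL-Number_Theory.Number_Theory"
begin

definition sigma :: "nat \<Rightarrow> nat" where
  "sigma n = (\<Sum>d \<in> {d. d dvd n}. d)"

definition perfect :: "nat \<Rightarrow> bool" where
  "perfect n \<longleftrightarrow> n > 0 \<and> sigma n = 2 * n"

definition exact_dvd :: "nat \<Rightarrow> nat \<Rightarrow> bool" where
  "exact_dvd a b \<longleftrightarrow> a dvd b \<and> gcd a (b div a) = 1"

definition Phi3 :: "nat \<Rightarrow> nat" where
  "Phi3 x = x^2 + x + 1"

definition Sigma7 :: "nat set" where
  "Sigma7 = {p. prime p \<and> (p mod 7 = 2 \<or> p mod 7 = 4)}"

definition T :: "nat \<Rightarrow> nat set" where
  "T x = {q. prime q \<and> q \<noteq> 3 \<and> q dvd Phi3 x}"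

fun S :: "nat \<Rightarrow> nat \<Rightarrow> nat set" where
  "S 0 p = {p}"
| "S (Suc n) p = S n p \<union> (\<Union>x \<in> S n p. T x)"

definition good :: "nat \<Rightarrow> bool" where
  "good p \<longleftrightarrow> prime p \<and> p > 7 \<and> (\<exists>n. S n p \<inter> Sigma7 \<noteq> {})"

end

theory Submission
  imports Defs "HOL-Number_Theory.Number_Theory"
begin

lemma lucas_me:
  fixes n a :: nat
  assumes "n \<ge> 2" "mod_exp a (n-1) n = 1" "foldr (*) ps 1 = n-1"
    "list_all (\<lambda>p. prime p \<and> mod_exp a ((n-1) div p) n \<noteq> 1) ps"
  shows "prime n"
proof (rule lucas_primefact[OF assms(1) _ assms(3)])
  have n1: "1 mod n = 1" using assms(1) by simp
  show "[a ^ (n - 1) = 1] (mod n)" using assms(2) n1 by (simp add: cong_power_nat_code)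
  show "list_all (\<lambda>p. prime p \<and> \<not> [a ^ ((n - 1) div p) = 1] (mod n)) ps"
    using assms(4) n1 by (simp add: cong_power_nat_code)
qed

lemma pock_me:
  fixes n a b q r :: nat
  assumes "n \<ge> 2" "q*r = n - 1" "n \<le> q^2" "mod_exp a r n = b" "foldr (*) ps 1 = q"
    "mod_exp b q n = 1"
    "list_all (\<lambda>p. prime p \<and> coprime (mod_exp b (q div p) n - 1) n) ps"
  shows "prime n"
  using assms by (intro pocklington_primefact[of n q r a b ps]) (simp_all add: mod_exp_def)

lemma p3: "prime (3::nat)" by (rule lucas_me[where a=2 and ps="[2]"]) simp_all
lemma p5: "prime (5::nat)" by (rule lucas_me[where a=2 and ps="[2,2]"]) simp_all
lemma p7: "prime (7::nat)" by (rule lucas_me[where a=3 and ps="[2,3]"]) (simp_all add: p3)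
lemma p11: "prime (11::nat)" by (rule lucas_me[where a=2 and ps="[2,5]"]) (simp_all add: p5)
lemma p13: "prime (13::nat)" by (rule lucas_me[where a=2 and ps="[2,2,3]"]) (simp_all add: p3)
lemma p19: "prime (19::nat)" by (rule lucas_me[where a=2 and ps="[2,3,3]"]) (simp_all add: p3)
lemma p31: "prime (31::nat)" by (rule lucas_me[where a=3 and ps="[2,3,5]"]) (simp_all add: p3 p5)
lemma p61: "prime (61::nat)" by (rule lucas_me[where a=2 and ps="[2,2,3,5]"]) (simp_all add: p3 p5)
lemma p79: "prime (79::nat)" by (rule lucas_me[where a=3 and ps="[2,3,13]"]) (simp_all add: p3 p13)
lemma p97: "prime (97::nat)" by (rule lucas_me[where a=5 and ps="[2,2,2,2,2,3]"]) (simp_all add: p3)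
lemma p151: "prime (151::nat)" by (rule lucas_me[where a=6 and ps="[2,3,5,5]"]) (simp_all add: p3 p5)
lemma p181: "prime (181::nat)" by (rule lucas_me[where a=2 and ps="[2,2,3,3,5]"]) (simp_all add: p3 p5)
lemma p251: "prime (251::nat)" by (rule lucas_me[where a=6 and ps="[2,5,5,5]"]) (simp_all add: p5)
lemma p331: "prime (331::nat)" by (rule lucas_me[where a=3 and ps="[2,3,5,11]"]) (simp_all add: p3 p5 p11)
lemma p3169: "prime (3169::nat)" by (rule lucas_me[where a=7 and ps="[2,2,2,2,2,3,3,11]"]) (simp_all add: p3 p11)
lemma p4519: "prime (4519::nat)" by (rule lucas_me[where a=3 and ps="[2,3,3,251]"]) (simp_all add: p3 p251)
lemma p3348577: "prime (3348577::nat)"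
proof (rule pock_me[where a=13 and q=11627 and r=288 and ps="[7,11,151]" and b=2148816])
  show "list_all (\<lambda>p. prime p \<and> coprime (mod_exp 2148816 (11627 div p) 3348577 - 1) (3348577::nat)) [7, 11, 151]"
    apply (simp only: list.pred_inject)
    apply (intro conjI)
    apply (fact p7)
    apply (simp add: coprime_iff_gcd_eq_1 gcd_non_0_nat)
    apply (fact p11)
    apply (simp add: coprime_iff_gcd_eq_1 gcd_non_0_nat)
    apply (fact p151)
    apply (simp add: coprime_iff_gcd_eq_1 gcd_non_0_nat)
    apply simp
    done
qed simp_all
lemma pbig: "prime (3737657091169::nat)"
proof (rule pock_me[where a=2 and q=8870797 and r=421344 and ps="[13,151,4519]" and b=955779654013])
  show "list_all (\<lambda>p. prime p \<and> coprime (mod_exp 955779654013 (8870797 div p) 3737657091169 - 1) (3737657091169::nat)) [13,151,4519]"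
    apply (simp only: list.pred_inject)
    apply (intro conjI)
    apply (fact p13)
    apply (simp add: coprime_iff_gcd_eq_1 gcd_non_0_nat)
    apply (fact p151)
    apply (simp add: coprime_iff_gcd_eq_1 gcd_non_0_nat)
    apply (fact p4519)
    apply (simp add: coprime_iff_gcd_eq_1 gcd_non_0_nat)
    apply simp
    done
qed simp_all

lemma sigma_mult:
  fixes a c :: nat
  assumes cop: "coprime a c" and a0: "a > 0" and c0: "c > 0"
  shows "sigma (a*c) = sigma a * sigma c"
proof -
  let ?A = "{d. d dvd a}" and ?B = "{d. d dvd c}"
  have fA: "finite ?A" using a0 by simp
  have fB: "finite ?B" using c0 by simp
  have img: "{d. d dvd a*c} = (\<lambda>(x,y). x*y) ` (?A \<times> ?B)"
  proof
    show "{d. d dvd a*c} \<subseteq> (\<lambda>(x,y). x*y) ` (?A \<times> ?B)"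
    proof
      fix d assume "d \<in> {d. d dvd a*c}"
      then have "d dvd a*c" by simp
      then obtain x y where "d = x*y" "x dvd a" "y dvd c" by (rule dvd_productE)
      then show "d \<in> (\<lambda>(x,y). x*y) ` (?A \<times> ?B)" by auto
    qed
    show "(\<lambda>(x,y). x*y) ` (?A \<times> ?B) \<subseteq> {d. d dvd a*c}"
      by (auto intro: mult_dvd_mono)
  qed
  have inj: "inj_on (\<lambda>(x,y). x*y) (?A \<times> ?B)"
  proof (rule inj_onI, clarsimp)
    fix x y x' y'
    assume h: "x dvd a" "y dvd c" "x' dvd a" "y' dvd c" "x*y = x'*y'"
    have c1: "coprime x y'" using h cop coprime_divisors by blast
    have c2: "coprime x' y" using h cop coprime_divisors by blast
    have "x dvd x'*y'" using h(5) by (metis dvd_triv_left)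
    then have "x dvd x'" using c1 by (simp add: coprime_dvd_mult_left_iff)
    moreover have "x' dvd x*y" using h(5) by (metis dvd_triv_left)
    then have "x' dvd x" using c2 by (simp add: coprime_dvd_mult_left_iff)
    ultimately have "x = x'" by (simp add: dvd_antisym)
    moreover have "x > 0" using h(1) a0 by (metis dvd_0_left_iff gr0I not_gr0)
    ultimately show "x = x' \<and> y = y'" using h(5) by simp
  qed
  have "sigma (a*c) = (\<Sum>d \<in> (\<lambda>(x,y). x*y) ` (?A \<times> ?B). d)"
    unfolding sigma_def img ..
  also have "\<dots> = (\<Sum>(x,y) \<in> ?A \<times> ?B. x*y)"
    by (subst sum.reindex[OF inj]) (simp add: case_prod_beta)
  also have "\<dots> = (\<Sum>x\<in>?A. \<Sum>y\<in>?B. x*y)"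
    by (rule sum.cartesian_product[symmetric])
  also have "\<dots> = sigma a * sigma c"
    unfolding sigma_def by (simp add: sum_product)
  finally show ?thesis .
qed

lemma sigma_pp:
  fixes p :: nat
  assumes "prime p"
  shows "sigma (p^k) = (\<Sum>i\<le>k. p^i)"
proof -
  have img: "{d. d dvd p^k} = (\<lambda>i. p^i) ` {..k}"
    using divides_primepow_nat[OF assms] by auto
  have "p > 1" using assms prime_gt_1_nat by blast
  then have inj: "inj_on (\<lambda>i. p^i) {..k}"
    by (auto intro!: inj_onI simp: power_inject_exp)
  show ?thesis unfolding sigma_def img by (simp add: sum.reindex[OF inj])
qed

lemma geom3: "(\<Sum>i<3*k. (x::nat)^i) = Phi3 x * (\<Sum>j<k. x^(3*j))"
proof (induction k)
  case 0 then show ?case by simp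
next
  case (Suc k)
  have e: "3 * Suc k = Suc (Suc (Suc (3*k)))" by simp
  show ?case unfolding e using Suc
    by (simp add: Phi3_def algebra_simps power_add power2_eq_square)
qed

lemma phi3_dvd_sigma:
  fixes q e :: nat
  assumes "prime q" "3 dvd e + 1"
  shows "Phi3 q dvd sigma (q^e)"
proof -
  obtain k where k: "e + 1 = 3*k" using assms(2) by blast
  have "sigma (q^e) = (\<Sum>i<e+1. q^i)"
    using sigma_pp[OF assms(1)] lessThan_Suc_atMost by simp
  also have "\<dots> = Phi3 q * (\<Sum>j<k. q^(3*j))" unfolding k by (rule geom3)
  finally show ?thesis by simp
qed

lemma key:
  fixes q e n :: nat
  assumes "perfect n" "prime q" "exact_dvd (q^e) n" "3 dvd e + 1"
  shows "Phi3 q dvd 2 * n"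
proof -
  define m where "m = n div q^e"
  have n0: "n > 0" and sn: "sigma n = 2 * n" using assms(1) unfolding perfect_def by auto
  have dv: "q^e dvd n" and g: "gcd (q^e) m = 1" using assms(3) unfolding exact_dvd_def m_def by auto
  have nm: "n = q^e * m" using dv unfolding m_def by simp
  have cop: "coprime (q^e) m" using g by (simp only: coprime_iff_gcd_eq_1)
  have m0: "m > 0" using nm n0 by (cases "m = 0") auto
  have q0: "q^e > 0" using assms(2) by (simp add: prime_gt_0_nat)
  have "sigma n = sigma (q^e) * sigma m" using sigma_mult[OF cop q0 m0] nm by simp
  then have "sigma (q^e) dvd sigma n" by simp
  then have "sigma (q^e) dvd 2 * n" using sn by simp
  then show ?thesis using phi3_dvd_sigma[OF assms(2,4)] dvd_trans by blast
qed

lemma S_mono: "x \<in> S k p \<Longrightarrow> x \<in> S (Suc k) p" by simp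
lemma S_step: "x \<in> S k p \<Longrightarrow> q \<in> T x \<Longrightarrow> q \<in> S (Suc k) p" by auto
lemma good31: "good 31"
proof -
  have s0: "31 \<in> S 0 31" by simp
  have t1: "331 \<in> T 31" unfolding T_def mem_Collect_eq by (intro conjI p331) (simp_all add: Phi3_def)
  have s1: "331 \<in> S (Suc 0) 31" by (rule S_step[OF s0 t1])
  have "331 \<in> Sigma7" unfolding Sigma7_def mem_Collect_eq by (intro conjI p331) simp
  then have "S (Suc 0) 31 \<inter> Sigma7 \<noteq> {}" using s1 by blast
  then have e: "\<exists>n. S n 31 \<inter> Sigma7 \<noteq> {}" by blast
  show ?thesis unfolding good_def by (intro conjI p31 e) simp
qed

lemma good13: "good 13"
proof -
  have s0: "13 \<in> S 0 13" by simp
  have t1: "61 \<in> T 13" unfolding T_def mem_Collect_eq by (intro conjI p61) (simp_all add: Phi3_def)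
  have s1: "61 \<in> S (Suc 0) 13" by (rule S_step[OF s0 t1])
  have t2: "97 \<in> T 61" unfolding T_def mem_Collect_eq by (intro conjI p97) (simp_all add: Phi3_def)
  have s2: "97 \<in> S (Suc (Suc 0)) 13" by (rule S_step[OF s1 t2])
  have t3: "3169 \<in> T 97" unfolding T_def mem_Collect_eq by (intro conjI p3169) (simp_all add: Phi3_def)
  have s3: "3169 \<in> S (Suc (Suc (Suc 0))) 13" by (rule S_step[OF s2 t3])
  have t4: "3348577 \<in> T 3169" unfolding T_def mem_Collect_eq by (intro conjI p3348577) (simp_all add: Phi3_def)
  have s4: "3348577 \<in> S (Suc (Suc (Suc (Suc 0)))) 13" by (rule S_step[OF s3 t4])
  have t5: "3737657091169 \<in> T 3348577" unfolding T_def mem_Collect_eq by (intro conjI pbig) (simp_all add: Phi3_def)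
  have s5: "3737657091169 \<in> S (Suc (Suc (Suc (Suc (Suc 0))))) 13" by (rule S_step[OF s4 t5])
  have t6: "181 \<in> T 3737657091169" unfolding T_def mem_Collect_eq by (intro conjI p181) (simp_all add: Phi3_def)
  have s6: "181 \<in> S (Suc (Suc (Suc (Suc (Suc (Suc 0)))))) 13" by (rule S_step[OF s5 t6])
  have t7: "79 \<in> T 181" unfolding T_def mem_Collect_eq by (intro conjI p79) (simp_all add: Phi3_def)
  have s7: "79 \<in> S (Suc (Suc (Suc (Suc (Suc (Suc (Suc 0))))))) 13" by (rule S_step[OF s6 t7])
  have "79 \<in> Sigma7" unfolding Sigma7_def mem_Collect_eq by (intro conjI p79) simp
  then have "S (Suc (Suc (Suc (Suc (Suc (Suc (Suc 0))))))) 13 \<inter> Sigma7 \<noteq> {}" using s7 by blast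
  then have e: "\<exists>n. S n 13 \<inter> Sigma7 \<noteq> {}" by blast
  show ?thesis unfolding good_def by (intro conjI p13 e) simp
qed

theorem proposition4p1:
  fixes n \<alpha> b :: nat
  assumes "perfect n" and "odd n" and "15 dvd n"
    and "\<alpha> > 0" and "b > 0"
    and "exact_dvd (5 ^ \<alpha>) n" and "exact_dvd (3 ^ (2 * b)) n"
    and "3 dvd (\<alpha> + 1) * (2 * b + 1)"
  shows "\<exists>p. p dvd n \<and> good p"
proof -
  have "3 dvd (\<alpha> + 1) \<or> 3 dvd (2 * b + 1)"
    using assms(8) p3 prime_dvd_mult_iff by blast
  then show ?thesis
  proof
    assume h: "3 dvd \<alpha> + 1"
    have "Phi3 5 dvd 2 * n" by (rule key[OF assms(1) p5 assms(6) h])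
    then have "31 dvd 2 * n" by (simp add: Phi3_def)
    then have "31 dvd n" using p31 prime_dvd_mult_iff[of 31 2 n] by simp
    then show ?thesis using good31 by blast
  next
    assume h: "3 dvd 2 * b + 1"
    have "Phi3 3 dvd 2 * n" by (rule key[OF assms(1) p3 assms(7) h])
    then have "13 dvd 2 * n" by (simp add: Phi3_def)
    then have "13 dvd n" using p13 prime_dvd_mult_iff[of 13 2 n] by simp
    then show ?thesis using good13 by blast
  qed
qed

end
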